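(* Let $m\ge 2d$. Then a generic $(\mathbf A,\mathbf b)\in\mathbb R^{m\times(d+1)}$ (with $\mathbf A\in\mathbb R^{m\times d}$, $\mathbf b\in\mathbb R^m$) is affine phase retrievable for $\mathbb R^d$; that is, there is a dense open set $X\subset\mathbb R^{m\times(d+1)}$ whose complement has Lebesgue measure zero such that every $(\mathbf A,\mathbf b)\in X$ is affine phase retrievable.
   Context: For $\mathbf A=(\mathbf a_1,\ldots,\mathbf a_m)^\top\in\mathbb R^{m\times d}$ and $\mathbf b=(b_1,\ldots,b_m)^\top\in\mathbb R^m$, $(\mathbf A,\mathbf b)$ is called affine phase retrievable for $\mathbb R^d$ if the map $\mathbf x\mapsto(|\langle\mathbf a_1,\mathbf x\rangle+b_1|,\ldots,|\langle\mathbf a_m,\mathbf x\rangle+b_m|)$ is injective on $\mathbb R^d$. An element of $\mathbb R^N$ is called generic (a property holds generically) if it lies in some dense open set whose complement is a null set. *)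

theory Defs
  imports "HOL-Analysis.Analysis"
begin

definition affine_phase_retrievable :: "real^'d^'m \<Rightarrow> real^'m \<Rightarrow> bool" where
  "affine_phase_retrievable A b \<longleftrightarrow>
     inj (\<lambda>x::real^'d. (\<chi> i. \<bar>(A *v x) $ i + b $ i\<bar>) :: real^'m)"

end

theory Submission
  imports Defs
begin

lemma span_image_sum:
  fixes z :: "'i \<Rightarrow> 'v::real_vector"
  assumes "finite T" "y \<in> span (z ` T)"
  shows "\<exists>c. y = (\<Sum>j\<in>T. c j *\<^sub>R z j)"
  using assms(2)
proof (induction rule: span_induct_alt)
  case base
  then show ?case by (rule exI[of _ "\<lambda>_. 0"]) simp
next
  case (step c x y)
  then obtain d where d: "y = (\<Sum>j\<in>T. d j *\<^sub>R z j)" by blast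
  from step obtain j0 where j0: "j0 \<in> T" "x = z j0" by blast
  have "c *\<^sub>R x + y = (\<Sum>j\<in>T. (d j + (if j = j0 then c else 0)) *\<^sub>R z j)"
  proof -
    have "(\<Sum>j\<in>T. (if j = j0 then c else 0) *\<^sub>R z j) = (\<Sum>j\<in>T. (if j = j0 then c *\<^sub>R z j else 0))"
      by (rule sum.cong) auto
    also have "\<dots> = c *\<^sub>R x" using j0 assms(1) by simp
    finally show ?thesis by (simp add: d scaleR_add_left sum.distrib)
  qed
  then show ?case apply - using [[show_types, show_sorts]] apply (rule exI) apply assumption done
qed

lemma dep_lemma:
  fixes z :: "'i \<Rightarrow> 'v::euclidean_space"
  assumes "finite T" "card T = DIM('v)" "u \<noteq> 0" "\<forall>j\<in>T. z j \<bullet> u = 0"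
  shows "\<exists>k\<in>T. z k \<in> span (z ` (T - {k}))"
proof (cases "inj_on z T")
  case False
  then obtain k j where "k \<in> T" "j \<in> T" "k \<noteq> j" "z k = z j" unfolding inj_on_def by blast
  then show ?thesis by (metis DiffI singletonD imageI span_base)
next
  case True
  let ?R = "z ` T"
  have cR: "card ?R = DIM('v)" using True assms card_image by metis
  have sub: "?R \<subseteq> {x. u \<bullet> x = 0}" using assms(4) by (auto simp: inner_commute)
  have "dependent ?R"
  proof (rule ccontr)
    assume "\<not> dependent ?R"
    then have "card ?R \<le> dim {x. u \<bullet> x = 0}" using sub independent_card_le_dim by blast
    also have "\<dots> = DIM('v) - 1" using dim_hyperplane[OF assms(3)] .
    finally show False using cR by (metis DIM_positive diff_less less_numeral_extra(1) not_le)
  qed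
  then obtain a where "a \<in> ?R" "a \<in> span (?R - {a})" unfolding dependent_def by blast
  then obtain k where k: "k \<in> T" "a = z k" "z k \<in> span (?R - {z k})" by blast
  have "?R - {z k} \<subseteq> z ` (T - {k})" by auto
  then show ?thesis using k span_mono by blast
qed

lemma bl_axis: "bounded_linear (axis k :: 'a::euclidean_space \<Rightarrow> 'a^'n)"
proof -
  have "linear (axis k :: 'a::euclidean_space \<Rightarrow> 'a^'n)"
    by (intro linearI) (simp_all add: vec_eq_iff axis_def)
  then show ?thesis by (simp add: linear_conv_bounded_linear)
qed

lemma bl1: "bounded_linear (\<lambda>p. fst p $ i)" 
  by (rule bounded_linear_compose[OF bounded_linear_vec_nth bounded_linear_fst])
lemma bl2: "bounded_linear (\<lambda>p. snd p $ i)" 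
  by (rule bounded_linear_compose[OF bounded_linear_vec_nth bounded_linear_snd])
lemma bl3: "bounded_linear (\<lambda>p. fst p $ i $ j)" 
  by (rule bounded_linear_compose[OF bounded_linear_vec_nth bl1])
lemma bl4: "bounded_linear (\<lambda>p::('a::euclidean_space^'n) \<times> 'b::euclidean_space. (\<chi> i. if i = k then 0 else fst p$i))"
proof -
  have "linear (\<lambda>p::('a::euclidean_space^'n) \<times> 'b::euclidean_space. (\<chi> i. if i = k then 0 else fst p$i))"
    by (intro linearI) (simp_all add: vec_eq_iff)
  then show ?thesis by (simp add: linear_conv_bounded_linear)
qed
lemma bl5: "bounded_linear (\<lambda>p::'b::euclidean_space \<times> ('a::euclidean_space^'n). (\<chi> i. if i = k then 0 else snd p$i))"
proof -
  have "linear (\<lambda>p::'b::euclidean_space \<times> ('a::euclidean_space^'n). (\<chi> i. if i = k then 0 else snd p$i))"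
    by (intro linearI) (simp_all add: vec_eq_iff)
  then show ?thesis by (simp add: linear_conv_bounded_linear)
qed



lemma dg1:
  fixes k :: "'m::finite" and e :: "'m \<Rightarrow> 'd::finite"
  shows "(\<lambda>p::(real^'d^'m) \<times> (real^'m). (\<chi> i. if i = k then (\<Sum>j\<in>T'. (fst p$k$e j) *\<^sub>R fst p$j) else fst p$i)::real^'d^'m) differentiable at x"
proof -
  have eq: "(\<lambda>p::(real^'d^'m) \<times> (real^'m). (\<chi> i. if i = k then (\<Sum>j\<in>T'. (fst p$k$e j) *\<^sub>R fst p$j) else fst p$i)::real^'d^'m) =
     (\<lambda>p. (\<chi> i. if i = k then 0 else fst p$i) + (\<Sum>j\<in>T'. axis k ((fst p$k$e j) *\<^sub>R fst p$j)))"
    by (auto simp: fun_eq_iff vec_eq_iff axis_def sum_component if_distrib cong: if_cong)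
  have ax: "\<And>f x. f differentiable at x \<Longrightarrow> (\<lambda>p. (axis k (f p::real^'d)::real^'d^'m)) differentiable at x"
    by (rule differentiable_compose[where f="axis k"], rule bounded_linear_imp_differentiable[OF bl_axis], assumption)+
  have c1: "\<And>x j. (\<lambda>p::(real^'d^'m) \<times> (real^'m). fst p$k$e j) differentiable at x"
    by (rule bounded_linear_imp_differentiable[OF bl3])
  have c2: "\<And>x j. (\<lambda>p::(real^'d^'m) \<times> (real^'m). fst p$j) differentiable at x"
    by (rule bounded_linear_imp_differentiable[OF bl1])
  have c4: "\<And>x. (\<lambda>p::(real^'d^'m) \<times> (real^'m). (\<chi> i. if i = k then 0 else fst p$i)::real^'d^'m) differentiable at x"
    by (rule bounded_linear_imp_differentiable[OF bl4])
  have "finite T'" by simp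
  show ?thesis unfolding eq
       apply (rule differentiable_add[OF c4[of x]])
       apply (rule differentiable_sum[OF \<open>finite T'\<close>])
       apply (intro ballI ax differentiable_scaleR c1 c2)
    done
qed

lemma dg2:
  fixes k :: "'m::finite" and e :: "'m \<Rightarrow> 'd::finite"
  shows "(\<lambda>p::(real^'d^'m) \<times> (real^'m). (\<chi> i. if i = k then (\<Sum>j\<in>T'. (fst p$k$e j) * snd p$j) else snd p$i)::real^'m) differentiable at x"
proof -
  have eq: "(\<lambda>p::(real^'d^'m) \<times> (real^'m). (\<chi> i. if i = k then (\<Sum>j\<in>T'. (fst p$k$e j) * snd p$j) else snd p$i)::real^'m) =
     (\<lambda>p. (\<chi> i. if i = k then 0 else snd p$i) + (\<Sum>j\<in>T'. axis k ((fst p$k$e j) * snd p$j)))"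
    by (auto simp: fun_eq_iff vec_eq_iff axis_def sum_component if_distrib cong: if_cong)
  have ax: "\<And>f x. f differentiable at x \<Longrightarrow> (\<lambda>p. (axis k (f p::real)::real^'m)) differentiable at x"
    by (rule differentiable_compose[where f="axis k"], rule bounded_linear_imp_differentiable[OF bl_axis], assumption)+
  have c1: "\<And>x j. (\<lambda>p::(real^'d^'m) \<times> (real^'m). fst p$k$e j) differentiable at x"
    by (rule bounded_linear_imp_differentiable[OF bl3])
  have c3: "\<And>x j. (\<lambda>p::(real^'d^'m) \<times> (real^'m). snd p$j) differentiable at x"
    by (rule bounded_linear_imp_differentiable[OF bl2])
  have c5: "\<And>x. (\<lambda>p::(real^'d^'m) \<times> (real^'m). (\<chi> i. if i = k then 0 else snd p$i)::real^'m) differentiable at x"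
    by (rule bounded_linear_imp_differentiable[OF bl5])
  have "finite T'" by simp
  show ?thesis unfolding eq
       apply (rule differentiable_add[OF c5[of x]])
       apply (rule differentiable_sum[OF \<open>finite T'\<close>])
       apply (intro ballI ax differentiable_mult c1 c3)
    done
qed

lemma nz1: fixes k :: "'m::finite" shows "(0::real^'d^'m, axis k (1::real)) \<noteq> 0"
proof
  assume "(0::real^'d^'m, axis k (1::real)) = 0"
  then have "(axis k (1::real)::real^'m) = 0" by (simp add: zero_prod_def)
  then show False by (simp add: axis_eq_0_iff)
qed
lemma nz2: fixes k :: "'m::finite" and i0 :: "'d::finite" shows "(axis k (axis i0 (1::real))::real^'d^'m, 0::real^'m) \<noteq> 0"
proof
  assume "(axis k (axis i0 (1::real))::real^'d^'m, 0::real^'m) = 0"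
  then have "(axis k (axis i0 (1::real))::real^'d^'m) = 0" by (simp add: zero_prod_def)
  then show False by (simp add: axis_eq_0_iff)
qed

lemma negl_B:
  fixes k :: "'m::finite" and T' :: "'m set"
  assumes "k \<notin> T'" "card T' = CARD('d::finite)"
  shows "negligible {p::(real^'d^'m) \<times> (real^'m). (fst p$k, snd p$k) \<in> span ((\<lambda>j. (fst p$j, snd p$j)) ` T')}"
proof -
  have "\<exists>e. bij_betw e T' (UNIV::'d set)"
    by (rule finite_same_card_bij) (simp_all add: assms(2))
  then obtain e where e: "bij_betw e T' (UNIV::'d set)" by blast
  define f where "f = (\<lambda>p::(real^'d^'m) \<times> (real^'m). ((\<chi> i. if i = k then (\<Sum>j\<in>T'. (fst p$k$e j) *\<^sub>R fst p$j) else fst p$i)::real^'d^'m,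
            (\<chi> i. if i = k then (\<Sum>j\<in>T'. (fst p$k$e j) * snd p$j) else snd p$i)::real^'m))"
  define S where "S = {p::(real^'d^'m) \<times> (real^'m). (0::real^'d^'m, axis k (1::real)) \<bullet> p = 0}"
  have nS: "negligible S" unfolding S_def
    by (rule negligible_hyperplane, rule disjI1, rule nz1)
  have df: "f differentiable_on S" unfolding f_def differentiable_on_def
    by (rule ballI, rule differentiable_at_withinI, rule differentiable_Pair, rule dg1, rule dg2)
  have nf: "negligible (f ` S)"
    by (rule negligible_differentiable_image_negligible[OF _ nS df]) simp
  show ?thesis
  proof (rule negligible_subset[OF nf], safe)
    fix A :: "real^'d^'m" and b :: "real^'m"
    assume "(fst (A, b) $ k, snd (A, b) $ k) \<in> span ((\<lambda>j. (fst (A, b) $ j, snd (A, b) $ j)) ` T')"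
    then have "\<exists>c. (A$k, b$k) = (\<Sum>j\<in>T'. c j *\<^sub>R (A$j, b$j))"
      by (intro span_image_sum) simp_all
    then obtain c where c: "(A$k, b$k) = (\<Sum>j\<in>T'. c j *\<^sub>R (A$j, b$j))" by blast
    have ck: "A$k = (\<Sum>j\<in>T'. c j *\<^sub>R A$j)" "b$k = (\<Sum>j\<in>T'. c j * b$j)"
      using arg_cong[OF c, of fst] arg_cong[OF c, of snd] by (simp_all add: fst_sum snd_sum)
    define A' where "A' = (\<chi> i. if i = k then (\<chi> l. c (inv_into T' e l)) else A$i)"
    define b' where "b' = (\<chi> i. if i = k then 0 else b$i)"
    have inv: "\<And>j. j \<in> T' \<Longrightarrow> inv_into T' e (e j) = j"
      using e by (simp add: bij_betw_def)
    have nk: "\<And>j. j \<in> T' \<Longrightarrow> j \<noteq> k" using assms(1) by auto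
    have "f (A', b') = (A, b)"
    proof -
      have "(\<Sum>j\<in>T'. (A'$k$e j) *\<^sub>R A'$j) = (\<Sum>j\<in>T'. c j *\<^sub>R A$j)"
        by (rule sum.cong) (auto simp: A'_def inv nk)
      moreover have "(\<Sum>j\<in>T'. (A'$k$e j) * b'$j) = (\<Sum>j\<in>T'. c j * b$j)"
        by (rule sum.cong) (auto simp: A'_def b'_def inv nk)
      ultimately show ?thesis
        by (auto simp: f_def vec_eq_iff ck A'_def b'_def)
    qed
    moreover have "(A', b') \<in> S" by (simp add: S_def b'_def inner_axis')
    ultimately show "(A, b) \<in> f ` S" by (metis image_eqI)
  qed
qed

lemma negl_A:
  fixes k :: "'m::finite" and T' :: "'m set"
  assumes "k \<notin> T'" "card T' = CARD('d::finite) - 1"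
  shows "negligible {p::(real^'d^'m) \<times> (real^'m). fst p$k \<in> span ((\<lambda>j. fst p$j) ` T')}"
proof -
  obtain i0 :: 'd where True by blast
  have "card (UNIV - {i0}) = CARD('d) - 1" by simp
  then have "\<exists>e. bij_betw e T' (UNIV - {i0})"
    by (intro finite_same_card_bij) (simp_all add: assms(2))
  then obtain e where e: "bij_betw e T' (UNIV - {i0})" by blast
  define f where "f = (\<lambda>p::(real^'d^'m) \<times> (real^'m). ((\<chi> i. if i = k then (\<Sum>j\<in>T'. (fst p$k$e j) *\<^sub>R fst p$j) else fst p$i)::real^'d^'m,
            snd p))"
  define S where "S = {p::(real^'d^'m) \<times> (real^'m). (axis k (axis i0 (1::real))::real^'d^'m, 0::real^'m) \<bullet> p = 0}"
  have nS: "negligible S" unfolding S_def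
    by (rule negligible_hyperplane, rule disjI1, rule nz2)
  have dsnd: "\<And>x. (\<lambda>p::(real^'d^'m) \<times> (real^'m). snd p) differentiable at x"
    by (rule bounded_linear_imp_differentiable[OF bounded_linear_snd])
  have df: "f differentiable_on S" unfolding f_def differentiable_on_def
    by (rule ballI, rule differentiable_at_withinI, rule differentiable_Pair, rule dg1, rule dsnd)
  have nf: "negligible (f ` S)"
    by (rule negligible_differentiable_image_negligible[OF _ nS df]) simp
  show ?thesis
  proof (rule negligible_subset[OF nf], safe)
    fix A :: "real^'d^'m" and b :: "real^'m"
    assume "fst (A, b) $ k \<in> span ((\<lambda>j. fst (A, b) $ j) ` T')"
    then have "\<exists>c. A$k = (\<Sum>j\<in>T'. c j *\<^sub>R A$j)"
      by (intro span_image_sum) simp_all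
    then obtain c where ck: "A$k = (\<Sum>j\<in>T'. c j *\<^sub>R A$j)" by blast
    define A' where "A' = (\<chi> i. if i = k then (\<chi> l. if l = i0 then 0 else c (inv_into T' e l)) else A$i)"
    have inv: "\<And>j. j \<in> T' \<Longrightarrow> inv_into T' e (e j) = j"
      using e by (simp add: bij_betw_def)
    have ne: "\<And>j. j \<in> T' \<Longrightarrow> e j \<noteq> i0"
      using e by (auto simp: bij_betw_def)
    have nk: "\<And>j. j \<in> T' \<Longrightarrow> j \<noteq> k" using assms(1) by auto
    have "f (A', b) = (A, b)"
    proof -
      have "(\<Sum>j\<in>T'. (A'$k$e j) *\<^sub>R A'$j) = (\<Sum>j\<in>T'. c j *\<^sub>R A$j)"
        by (rule sum.cong) (auto simp: A'_def inv nk ne)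
      then show ?thesis
        by (auto simp: f_def vec_eq_iff ck A'_def)
    qed
    moreover have "(A', b) \<in> S" by (simp add: S_def A'_def inner_axis')
    ultimately show "(A, b) \<in> f ` S" by (metis image_eqI)
  qed
qed


definition BA :: "'m set \<Rightarrow> ((real^'d::finite^'m::finite) \<times> (real^'m)) set" where
  "BA T = {p. \<exists>u::real^'d. norm u = 1 \<and> (\<forall>i\<in>T. fst p$i \<bullet> u = 0)}"

definition BB :: "'m set \<Rightarrow> ((real^'d::finite^'m::finite) \<times> (real^'m)) set" where
  "BB T = {p. \<exists>w::(real^'d) \<times> real. norm w = 1 \<and> (\<forall>i\<in>T. (fst p$i, snd p$i) \<bullet> w = 0)}"

lemma closed_BA:
  fixes T :: "'m::finite set"
  shows "closed (BA T :: ((real^'d::finite^'m) \<times> (real^'m)) set)"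
proof -
  have eq: "BA T = {y. \<exists>x. x \<in> sphere (0::real^'d) 1 \<and> (x, y) \<in> {z. \<forall>i\<in>T. fst (snd z)$i \<bullet> fst z = 0}}"
    by (auto simp: BA_def)
  moreover have cl: "closed {z::(real^'d) \<times> ((real^'d^'m) \<times> (real^'m)). \<forall>i\<in>T. fst (snd z)$i \<bullet> fst z = 0}"
  proof -
    have "{z::(real^'d) \<times> ((real^'d^'m) \<times> (real^'m)). \<forall>i\<in>T. fst (snd z)$i \<bullet> fst z = 0}
      = (\<Inter>i\<in>T. {z. fst (snd z)$i \<bullet> fst z = 0})" by auto
    moreover have cl: "closed {z::(real^'d) \<times> ((real^'d^'m) \<times> (real^'m)). fst (snd z)$i \<bullet> fst z = 0}" for i
      by (rule closed_Collect_eq; intro continuous_intros)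
    ultimately show ?thesis by (simp add: closed_INT)
  qed
  show ?thesis unfolding eq by (rule closed_compact_projection[OF compact_sphere cl])
qed

lemma closed_BB:
  fixes T :: "'m::finite set"
  shows "closed (BB T :: ((real^'d::finite^'m) \<times> (real^'m)) set)"
proof -
  have eq: "BB T = {y. \<exists>x. x \<in> sphere (0::(real^'d) \<times> real) 1 \<and> (x, y) \<in> {z. \<forall>i\<in>T. (fst (snd z)$i, snd (snd z)$i) \<bullet> fst z = 0}}"
    by (auto simp: BB_def)
  moreover have cl: "closed {z::((real^'d) \<times> real) \<times> ((real^'d^'m) \<times> (real^'m)). \<forall>i\<in>T. (fst (snd z)$i, snd (snd z)$i) \<bullet> fst z = 0}"
  proof -
    have "{z::((real^'d) \<times> real) \<times> ((real^'d^'m) \<times> (real^'m)). \<forall>i\<in>T. (fst (snd z)$i, snd (snd z)$i) \<bullet> fst z = 0}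
      = (\<Inter>i\<in>T. {z. (fst (snd z)$i, snd (snd z)$i) \<bullet> fst z = 0})" by auto
    moreover have cl: "closed {z::((real^'d) \<times> real) \<times> ((real^'d^'m) \<times> (real^'m)). (fst (snd z)$i, snd (snd z)$i) \<bullet> fst z = 0}" for i
      by (rule closed_Collect_eq; intro continuous_intros)
    ultimately show ?thesis by (simp add: closed_INT)
  qed
  show ?thesis unfolding eq by (rule closed_compact_projection[OF compact_sphere cl])
qed

lemma negl_BA:
  assumes "card T = CARD('d::finite)"
  shows "negligible (BA T :: ((real^'d^'m::finite) \<times> (real^'m)) set)"
proof -
  have "BA T \<subseteq> (\<Union>k\<in>T. {p::(real^'d^'m) \<times> (real^'m). fst p$k \<in> span ((\<lambda>j. fst p$j) ` (T - {k}))})"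
  proof
    fix p :: "(real^'d^'m) \<times> (real^'m)"
    assume "p \<in> BA T"
    then obtain u :: "real^'d" where u: "norm u = 1" "\<forall>i\<in>T. fst p$i \<bullet> u = 0" by (auto simp: BA_def)
    have "\<exists>k\<in>T. fst p$k \<in> span ((\<lambda>j. fst p$j) ` (T - {k}))"
      by (rule dep_lemma[where u=u]) (use u assms in auto)
    then show "p \<in> (\<Union>k\<in>T. {p::(real^'d^'m) \<times> (real^'m). fst p$k \<in> span ((\<lambda>j. fst p$j) ` (T - {k}))})"
      by blast
  qed
  moreover have "negligible (\<Union>k\<in>T. {p::(real^'d^'m) \<times> (real^'m). fst p$k \<in> span ((\<lambda>j. fst p$j) ` (T - {k}))})"
  proof (rule negligible_Union)
    show "finite ((\<lambda>k. {p::(real^'d^'m) \<times> (real^'m). fst p$k \<in> span ((\<lambda>j. fst p$j) ` (T - {k}))}) ` T)" by simp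
  next
    fix S assume "S \<in> (\<lambda>k. {p::(real^'d^'m) \<times> (real^'m). fst p$k \<in> span ((\<lambda>j. fst p$j) ` (T - {k}))}) ` T"
    then obtain k where k: "k \<in> T" "S = {p::(real^'d^'m) \<times> (real^'m). fst p$k \<in> span ((\<lambda>j. fst p$j) ` (T - {k}))}" by blast
    have "card (T - {k}) = CARD('d) - 1" using k assms by simp
    then show "negligible S" unfolding k(2) by (intro negl_A) auto
  qed
  ultimately show ?thesis by (rule negligible_subset[rotated])
qed

lemma negl_BB:
  assumes "card T = Suc CARD('d::finite)"
  shows "negligible (BB T :: ((real^'d^'m::finite) \<times> (real^'m)) set)"
proof -
  have "BB T \<subseteq> (\<Union>k\<in>T. {p::(real^'d^'m) \<times> (real^'m). (fst p$k, snd p$k) \<in> span ((\<lambda>j. (fst p$j, snd p$j)) ` (T - {k}))})"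
  proof
    fix p :: "(real^'d^'m) \<times> (real^'m)"
    assume "p \<in> BB T"
    then obtain u :: "(real^'d) \<times> real" where u: "norm u = 1" "\<forall>i\<in>T. (fst p$i, snd p$i) \<bullet> u = 0" by (auto simp: BB_def)
    have "\<exists>k\<in>T. (fst p$k, snd p$k) \<in> span ((\<lambda>j. (fst p$j, snd p$j)) ` (T - {k}))"
      by (rule dep_lemma[where u=u]) (use u assms in auto)
    then show "p \<in> (\<Union>k\<in>T. {p::(real^'d^'m) \<times> (real^'m). (fst p$k, snd p$k) \<in> span ((\<lambda>j. (fst p$j, snd p$j)) ` (T - {k}))})"
      by blast
  qed
  moreover have "negligible (\<Union>k\<in>T. {p::(real^'d^'m) \<times> (real^'m). (fst p$k, snd p$k) \<in> span ((\<lambda>j. (fst p$j, snd p$j)) ` (T - {k}))})"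
  proof (rule negligible_Union)
    show "finite ((\<lambda>k. {p::(real^'d^'m) \<times> (real^'m). (fst p$k, snd p$k) \<in> span ((\<lambda>j. (fst p$j, snd p$j)) ` (T - {k}))}) ` T)" by simp
  next
    fix S assume "S \<in> (\<lambda>k. {p::(real^'d^'m) \<times> (real^'m). (fst p$k, snd p$k) \<in> span ((\<lambda>j. (fst p$j, snd p$j)) ` (T - {k}))}) ` T"
    then obtain k where k: "k \<in> T" "S = {p::(real^'d^'m) \<times> (real^'m). (fst p$k, snd p$k) \<in> span ((\<lambda>j. (fst p$j, snd p$j)) ` (T - {k}))}" by blast
    have "card (T - {k}) = CARD('d)" using k assms by simp
    then show "negligible S" unfolding k(2) by (intro negl_B) auto
  qed
  ultimately show ?thesis by (rule negligible_subset[rotated])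
qed

theorem theorem2p3:
  assumes "CARD('m::finite) \<ge> 2 * CARD('d::finite)"
  shows "\<exists>X :: ((real^'d^'m) \<times> (real^'m)) set.
           open X \<and> closure X = UNIV \<and> negligible (- X) \<and>
           (\<forall>(A, b) \<in> X. affine_phase_retrievable A b)"
proof -
  define B :: "((real^'d^'m) \<times> (real^'m)) set" where
    "B = (\<Union>T\<in>{T. card T = CARD('d)}. BA T) \<union> (\<Union>T\<in>{T. card T = Suc CARD('d)}. BB T)"
  have clB: "closed B" unfolding B_def
    by (intro closed_Un closed_UN) (simp_all add: closed_BA closed_BB)
  have nB: "negligible B" unfolding B_def
    by (intro negligible_Un negligible_Union) (simp_all, auto intro: negl_BA negl_BB)
  have intB: "interior B = {}"
  proof (rule ccontr)
    assume "interior B \<noteq> {}"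
    then have "\<not> negligible (interior B)" by (rule open_not_negligible[OF open_interior])
    moreover have "negligible (interior B)" by (rule negligible_subset[OF nB interior_subset])
    ultimately show False by blast
  qed
  have inj: "affine_phase_retrievable A b" if "(A, b) \<notin> B" for A b
    unfolding affine_phase_retrievable_def
  proof (rule injI, rule ccontr)
    fix x y :: "real^'d"
    assume eq: "(\<chi> i. \<bar>(A *v x) $ i + b $ i\<bar>) = ((\<chi> i. \<bar>(A *v y) $ i + b $ i\<bar>) :: real^'m)" and "x \<noteq> y"
    have eqi: "\<bar>A$i \<bullet> x + b$i\<bar> = \<bar>A$i \<bullet> y + b$i\<bar>" for i
      using eq by (auto simp: vec_eq_iff matrix_vector_mul_component)
    define S where "S = {i. A$i \<bullet> (x - y) = 0}"
    show False
    proof (cases "CARD('d) \<le> card S")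
      case True
      then obtain T where T: "T \<subseteq> S" "card T = CARD('d)" by (metis obtain_subset_with_card_n)
      define u where "u = (1 / norm (x - y)) *\<^sub>R (x - y)"
      have "norm u = 1" using \<open>x \<noteq> y\<close> by (simp add: u_def)
      moreover have "\<forall>i\<in>T. A$i \<bullet> u = 0" using T by (auto simp: u_def S_def)
      ultimately have "(A, b) \<in> BA T" by (auto simp: BA_def)
      then show False using that T by (auto simp: B_def)
    next
      case False
      have "card (- S) = CARD('m) - card S" by (simp add: Compl_eq_Diff_UNIV card_Diff_subset)
      then have "Suc CARD('d) \<le> card (- S)" using False assms by linarith
      then obtain T where T: "T \<subseteq> - S" "card T = Suc CARD('d)" by (metis obtain_subset_with_card_n)
      define w0 where "w0 = (x + y, 2::real)"
      have "w0 \<noteq> 0" by (simp add: w0_def zero_prod_def)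
      define w where "w = (1 / norm w0) *\<^sub>R w0"
      have "norm w = 1" using \<open>w0 \<noteq> 0\<close> by (simp add: w_def)
      moreover have "(A$i, b$i) \<bullet> w = 0" if "i \<in> T" for i
      proof -
        have "A$i \<bullet> (x - y) \<noteq> 0" using T that by (auto simp: S_def)
        then have "A$i \<bullet> x + b$i \<noteq> A$i \<bullet> y + b$i" by (simp add: inner_diff_right)
        then have "A$i \<bullet> x + b$i = - (A$i \<bullet> y + b$i)" using eqi[of i] by (auto simp: abs_eq_iff)
        then have "(A$i, b$i) \<bullet> w0 = 0" by (simp add: w0_def inner_add_right)
        then show ?thesis by (simp add: w_def)
      qed
      ultimately have "(A, b) \<in> BB T" unfolding BB_def mem_Collect_eq fst_conv snd_conv by blast
      then show False using that T by (auto simp: B_def)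
    qed
  qed
  show ?thesis
  proof (intro exI[of _ "- B"] conjI)
    show "open (- B)" using clB by (simp add: open_Compl)
    show "closure (- B) = UNIV" by (simp add: closure_interior intB)
    show "negligible (- (- B))" using nB by simp
    show "\<forall>(A, b) \<in> - B. affine_phase_retrievable A b" using inj by auto
  qed
qed

end
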